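(* Let $q\ge 1$ and $s\ge 3$ be integers, let $G=K_1\vee (C_s\cup qK_2)$ have $n\ge 16$ vertices, and let $H$ be a simple graph with the same $Q$-spectrum as $G$. Then $G$ and $H$ have the same degree sequence, and $H$ and $G$ contain the same number of triangles (subgraphs isomorphic to $C_3$).
   Context: Graphs are simple. $K_1\vee H$ adds one vertex adjacent to every vertex of $H$; $\cup$ is disjoint union; $qK_2$ is $q$ disjoint edges; $C_s$ is the cycle on $s$ vertices. The $Q$-spectrum of a graph is the multiset of eigenvalues of $Q=A+D$ (adjacency matrix plus diagonal degree matrix). *)

theory Defs
  imports "Jordan_Normal_Form.Char_Poly" "HOL-Computational_Algebra.Polynomial"
begin

definition simple_graph :: "nat \<Rightarrow> (nat \<Rightarrow> nat \<Rightarrow> bool) \<Rightarrow> bool" where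
  "simple_graph n E \<longleftrightarrow>
     (\<forall>i j. E i j \<longrightarrow> i < n \<and> j < n) \<and>
     (\<forall>i j. E i j \<longrightarrow> E j i) \<and> (\<forall>i. \<not> E i i)"

definition deg :: "nat \<Rightarrow> (nat \<Rightarrow> nat \<Rightarrow> bool) \<Rightarrow> nat \<Rightarrow> nat" where
  "deg n E i = card {j. j < n \<and> E i j}"

definition Q_matrix :: "nat \<Rightarrow> (nat \<Rightarrow> nat \<Rightarrow> bool) \<Rightarrow> complex mat" where
  "Q_matrix n E = mat n n (\<lambda>(i,j). if i = j then of_nat (deg n E i)
                                   else if E i j then 1 else 0)"

definition Q_spectrum :: "nat \<Rightarrow> (nat \<Rightarrow> nat \<Rightarrow> bool) \<Rightarrow> complex multiset" where
  "Q_spectrum n E = proots (char_poly (Q_matrix n E))"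

definition degree_sequence :: "nat \<Rightarrow> (nat \<Rightarrow> nat \<Rightarrow> bool) \<Rightarrow> nat multiset" where
  "degree_sequence n E = mset (map (deg n E) [0..<n])"

definition triangles :: "nat \<Rightarrow> (nat \<Rightarrow> nat \<Rightarrow> bool) \<Rightarrow> nat" where
  "triangles n E = card {T. T \<subseteq> {0..<n} \<and> card T = 3 \<and> (\<forall>x\<in>T. \<forall>y\<in>T. x \<noteq> y \<longrightarrow> E x y)}"

text \<open>K_1 \<vee> (C_s \<union> qK_2): vertex 0 is the cone vertex, vertices 1..s form the cycle
  (i ~ i+1, and s ~ 1), vertices s+1..s+2q are matched as (s+2k-1, s+2k), k = 1..q.\<close>
definition cycle_adj :: "nat \<Rightarrow> nat \<Rightarrow> nat \<Rightarrow> bool" where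
  "cycle_adj s i j \<longleftrightarrow> 1 \<le> i \<and> i \<le> s \<and> 1 \<le> j \<and> j \<le> s \<and>
     (j = i + 1 \<or> i = j + 1 \<or> (i = s \<and> j = 1) \<or> (i = 1 \<and> j = s))"

definition match_adj :: "nat \<Rightarrow> nat \<Rightarrow> nat \<Rightarrow> nat \<Rightarrow> bool" where
  "match_adj s q i j \<longleftrightarrow> (\<exists>k. 1 \<le> k \<and> k \<le> q \<and>
     ((i = s + 2*k - 1 \<and> j = s + 2*k) \<or> (j = s + 2*k - 1 \<and> i = s + 2*k)))"

definition cone_adj :: "nat \<Rightarrow> nat \<Rightarrow> nat \<Rightarrow> nat \<Rightarrow> bool" where
  "cone_adj s q i j \<longleftrightarrow> (i = 0 \<and> 1 \<le> j \<and> j \<le> s + 2*q) \<or> (j = 0 \<and> 1 \<le> i \<and> i \<le> s + 2*q)"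

definition G_adj :: "nat \<Rightarrow> nat \<Rightarrow> nat \<Rightarrow> nat \<Rightarrow> bool" where
  "G_adj s q i j \<longleftrightarrow> cone_adj s q i j \<or> cycle_adj s i j \<or> match_adj s q i j"

end

theory Submission
  imports Defs "Jordan_Normal_Form.Schur_Decomposition"
begin

lemma proots_linear_prod: "proots (\<Prod>a\<leftarrow>as. [:- a, 1:]) = mset (as :: complex list)"
proof (induction as)
  case Nil
  then show ?case by simp
next
  case (Cons a as)
  have nz: "(\<Prod>a\<leftarrow>as. [:- a, 1:]) \<noteq> (0 :: complex poly)"
    by (subst prod_list_zero_iff) auto
  have e: "(\<Prod>a\<leftarrow>a # as. [:- a, 1:]) = [:- a, 1:] * (\<Prod>a\<leftarrow>as. [:- a, 1:])"
    by (simp only: list.map prod_list.Cons)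
  have "proots ([:- a, 1:] * (\<Prod>a\<leftarrow>as. [:- a, 1:])) = proots [:- a, 1:] + proots (\<Prod>a\<leftarrow>as. [:- a, 1:])"
    using nz by (intro proots_mult) auto
  then show ?case unfolding e using Cons proots_linear_factor[of "-a"] by simp
qed

lemma mult_entry:
  assumes "A \<in> carrier_mat n n" "B \<in> carrier_mat n n" "i < n" "j < n"
  shows "(A * B) $$ (i,j) = (\<Sum>k<n. A $$ (i,k) * B $$ (k,j))"
  using assms by (simp add: scalar_prod_def lessThan_atLeast0)

lemma trace_similar:
  fixes P M Q :: "'a::comm_ring_1 mat"
  assumes P: "P \<in> carrier_mat n n" and M: "M \<in> carrier_mat n n" and Q: "Q \<in> carrier_mat n n"
    and QP: "Q * P = 1\<^sub>m n"
  shows "(\<Sum>i<n. (P * M * Q) $$ (i,i)) = (\<Sum>i<n. M $$ (i,i))"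
proof -
  have "(\<Sum>i<n. (P * M * Q) $$ (i,i)) = (\<Sum>i<n. \<Sum>j<n. (\<Sum>l<n. P $$ (i,l) * M $$ (l,j)) * Q $$ (j,i))"
  proof (rule sum.cong[OF refl])
    fix i assume i: "i \<in> {..<n}"
    have PM: "P * M \<in> carrier_mat n n" using P M by simp
    show "(P * M * Q) $$ (i,i) = (\<Sum>j<n. (\<Sum>l<n. P $$ (i,l) * M $$ (l,j)) * Q $$ (j,i))"
    proof -
      have "(P * M * Q) $$ (i,i) = (\<Sum>j<n. (P * M) $$ (i,j) * Q $$ (j,i))"
        using mult_entry[OF PM Q, of i i] i by simp
      also have "\<dots> = (\<Sum>j<n. (\<Sum>l<n. P $$ (i,l) * M $$ (l,j)) * Q $$ (j,i))"
        by (rule sum.cong[OF refl], subst mult_entry[OF P M], use i in auto)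
      finally show ?thesis .
    qed
  qed
  also have "\<dots> = (\<Sum>i<n. \<Sum>j<n. \<Sum>l<n. P $$ (i,l) * M $$ (l,j) * Q $$ (j,i))"
    by (simp only: sum_distrib_right)
  also have "\<dots> = (\<Sum>i<n. \<Sum>l<n. \<Sum>j<n. P $$ (i,l) * M $$ (l,j) * Q $$ (j,i))"
    by (rule sum.cong[OF refl], rule sum.swap)
  also have "\<dots> = (\<Sum>l<n. \<Sum>i<n. \<Sum>j<n. P $$ (i,l) * M $$ (l,j) * Q $$ (j,i))"
    by (rule sum.swap)
  also have "\<dots> = (\<Sum>l<n. \<Sum>j<n. \<Sum>i<n. P $$ (i,l) * M $$ (l,j) * Q $$ (j,i))"
    by (rule sum.cong[OF refl], rule sum.swap)
  also have "\<dots> = (\<Sum>l<n. \<Sum>j<n. M $$ (l,j) * (\<Sum>i<n. Q $$ (j,i) * P $$ (i,l)))"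
    by (intro sum.cong refl) (simp only: sum_distrib_left mult_ac)
  also have "\<dots> = (\<Sum>l<n. \<Sum>j<n. M $$ (l,j) * (1\<^sub>m n) $$ (j,l))"
    using P Q by (simp add: mult_entry[of _ n, symmetric] QP)
  also have "\<dots> = (\<Sum>l<n. \<Sum>j<n. (if l = j then M $$ (l,l) else 0))"
    by (intro sum.cong refl) auto
  also have "\<dots> = (\<Sum>l<n. M $$ (l,l))"
    by simp
  finally show ?thesis .
qed

lemma ut_mult:
  fixes X Y :: "'a::comm_ring_1 mat"
  assumes X: "X \<in> carrier_mat n n" and Y: "Y \<in> carrier_mat n n"
    and uX: "upper_triangular X" and uY: "upper_triangular Y"
  shows "upper_triangular (X * Y)" "\<And>i. i < n \<Longrightarrow> (X * Y) $$ (i,i) = X $$ (i,i) * Y $$ (i,i)"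
proof -
  show "upper_triangular (X * Y)"
  proof (rule upper_triangularI)
    fix i j assume j: "j < i" and i: "i < dim_row (X * Y)"
    hence i': "i < n" using X by simp
    have "(X * Y) $$ (i,j) = (\<Sum>k<n. X $$ (i,k) * Y $$ (k,j))"
      using mult_entry[OF X Y i'] j i' by simp
    also have "\<dots> = 0"
    proof (rule sum.neutral, intro ballI)
      fix k assume k: "k \<in> {..<n}"
      show "X $$ (i,k) * Y $$ (k,j) = 0"
      proof (cases "k < i")
        case True then show ?thesis using uX X i' by (auto simp: upper_triangular_def)
      next
        case False then have "j < k" using j by simp
        then show ?thesis using uY Y k by (auto simp: upper_triangular_def)
      qed
    qed
    finally show "(X * Y) $$ (i,j) = 0" .
  qed
  fix i assume i: "i < n"
  have "(X * Y) $$ (i,i) = (\<Sum>k<n. X $$ (i,k) * Y $$ (k,i))"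
    using mult_entry[OF X Y i i] by simp
  also have "\<dots> = X $$ (i,i) * Y $$ (i,i) + (\<Sum>k\<in>{..<n}-{i}. X $$ (i,k) * Y $$ (k,i))"
    using i by (subst sum.remove[of _ i]) auto
  also have "(\<Sum>k\<in>{..<n}-{i}. X $$ (i,k) * Y $$ (k,i)) = 0"
  proof (rule sum.neutral, intro ballI)
    fix k assume k: "k \<in> {..<n}-{i}"
    show "X $$ (i,k) * Y $$ (k,i) = 0"
    proof (cases "k < i")
      case True then show ?thesis using uX X i by (auto simp: upper_triangular_def)
    next
      case False then have "i < k" using k by auto
      then show ?thesis using uY Y k by (auto simp: upper_triangular_def)
    qed
  qed
  finally show "(X * Y) $$ (i,i) = X $$ (i,i) * Y $$ (i,i)" by simp
qed

lemma ut_pow: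
  fixes B :: "'a::comm_ring_1 mat"
  assumes B: "B \<in> carrier_mat n n" and uB: "upper_triangular B"
  shows "upper_triangular (B ^\<^sub>m k) \<and> (\<forall>i<n. (B ^\<^sub>m k) $$ (i,i) = B $$ (i,i) ^ k)"
proof (induction k)
  case 0
  then show ?case using B by auto
next
  case (Suc k)
  have Bk: "B ^\<^sub>m k \<in> carrier_mat n n" using B by simp
  show ?case using ut_mult[OF Bk B _ uB] Suc by (simp add: mult.commute)
qed

lemma spec_trace:
  fixes A :: "complex mat"
  assumes A: "A \<in> carrier_mat n n"
  shows "(\<Sum>i<n. (A ^\<^sub>m k) $$ (i,i)) = (\<Sum>x\<in>#proots (char_poly A). x ^ k)"
    and "size (proots (char_poly A)) = n"
proof -
  obtain as where cp: "char_poly A = (\<Prod>a\<leftarrow>as. [:- a, 1:])" and len: "length as = n"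
    using char_poly_factorized[OF A] by blast
  have pr: "proots (char_poly A) = mset as" using cp proots_linear_prod by simp
  then show "size (proots (char_poly A)) = n" using len by simp
  obtain B P Q where sd: "schur_decomposition A as = (B,P,Q)" by (cases "schur_decomposition A as") auto
  from schur_decomposition[OF A cp sd]
  have sim: "similar_mat_wit A B P Q" and uB: "upper_triangular B" and dg: "diag_mat B = as" by auto
  note w = similar_mat_witD2[OF A sim]
  have "A ^\<^sub>m k = P * B ^\<^sub>m k * Q" using similar_mat_wit_pow_id[OF sim] .
  then have "(\<Sum>i<n. (A ^\<^sub>m k) $$ (i,i)) = (\<Sum>i<n. (B ^\<^sub>m k) $$ (i,i))"
    using trace_similar[of P n "B ^\<^sub>m k" Q] w by simp
  also have "\<dots> = (\<Sum>i<n. B $$ (i,i) ^ k)"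
    using ut_pow[OF w(5) uB, of k] by simp
  also have "\<dots> = (\<Sum>x\<in>#mset as. x ^ k)"
  proof -
    have "as = map (\<lambda>i. B $$ (i,i)) [0..<n]" using dg w(5) by (simp add: diag_mat_def)
    have "(\<Sum>x\<in>#mset as. x ^ k) = sum_list (map (\<lambda>x. x ^ k) as)"
      by (metis mset_map sum_mset_sum_list)
    also have "\<dots> = sum_list (map (\<lambda>i. B $$ (i,i) ^ k) [0..<n])"
      using `as = _` by (simp add: o_def)
    also have "\<dots> = (\<Sum>i<n. B $$ (i,i) ^ k)"
      by (simp add: interv_sum_list_conv_sum_set_nat atLeast0LessThan)
    finally show ?thesis by simp
  qed
  finally show "(\<Sum>i<n. (A ^\<^sub>m k) $$ (i,i)) = (\<Sum>x\<in>#proots (char_poly A). x ^ k)"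
    using pr by simp
qed

definition adj :: "(nat \<Rightarrow> nat \<Rightarrow> bool) \<Rightarrow> nat \<Rightarrow> nat \<Rightarrow> nat" where
  "adj E i j = (if E i j then 1 else 0)"

definition qn :: "nat \<Rightarrow> (nat \<Rightarrow> nat \<Rightarrow> bool) \<Rightarrow> nat \<Rightarrow> nat \<Rightarrow> nat" where
  "qn n E i j = (if i = j then deg n E i else adj E i j)"

definition Wt :: "nat \<Rightarrow> (nat \<Rightarrow> nat \<Rightarrow> bool) \<Rightarrow> nat" where
  "Wt n E = (\<Sum>i<n. \<Sum>k<n. \<Sum>l<n. adj E i k * adj E k l * adj E l i)"

lemma deg_sum: "deg n E i = (\<Sum>j<n. adj E i j)"
proof -
  have "(\<Sum>j<n. adj E i j) = (\<Sum>j\<in>{..<n}. if E i j then 1 else 0)" by (simp add: adj_def)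
  also have "\<dots> = card ({..<n} \<inter> Collect (E i))" by (simp add: sum.If_cases)
  also have "{..<n} \<inter> Collect (E i) = {j. j < n \<and> E i j}" by auto
  finally show ?thesis by (simp add: deg_def)
qed

context
  fixes n E assumes sg: "simple_graph n E"
begin

lemma adj_sym: "adj E i j = adj E j i"
  using sg by (auto simp: simple_graph_def adj_def)

lemma adj_irr[simp]: "adj E i i = 0"
  using sg by (auto simp: simple_graph_def adj_def)

lemma adj_out: "\<not> i < n \<or> \<not> j < n \<Longrightarrow> adj E i j = 0"
  using sg by (auto simp: simple_graph_def adj_def)

lemma adj_sq: "adj E i j * adj E i j = adj E i j"
  by (simp add: adj_def)

lemma adj_q: "adj E i l * qn n E l i = adj E i l"
  using sg by (cases "l = i") (auto simp: qn_def adj_def simple_graph_def)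

lemma qL: "i < n \<Longrightarrow> (\<Sum>k<n. qn n E i k * X k) = deg n E i * X i + (\<Sum>k<n. adj E i k * X k)"
proof -
  assume i: "i < n"
  have "(\<Sum>k<n. qn n E i k * X k) = (\<Sum>k<n. (if i = k then deg n E i * X i else 0) + adj E i k * X k)"
    by (rule sum.cong) (auto simp: qn_def)
  also have "\<dots> = deg n E i * X i + (\<Sum>k<n. adj E i k * X k)"
    using i by (simp add: sum.distrib)
  finally show ?thesis .
qed

lemma qR: "i < n \<Longrightarrow> (\<Sum>k<n. X k * qn n E k i) = X i * deg n E i + (\<Sum>k<n. X k * adj E k i)"
proof -
  assume i: "i < n"
  have "(\<Sum>k<n. X k * qn n E k i) = (\<Sum>k<n. (if i = k then X i * deg n E i else 0) + X k * adj E k i)"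
    by (rule sum.cong) (auto simp: qn_def)
  also have "\<dots> = X i * deg n E i + (\<Sum>k<n. X k * adj E k i)"
    using i by (simp add: sum.distrib)
  finally show ?thesis .
qed

lemma Y_diag: "i < n \<Longrightarrow> (\<Sum>l<n. qn n E i l * qn n E l i) = deg n E i ^ 2 + deg n E i"
proof -
  assume i: "i < n"
  have "(\<Sum>l<n. qn n E i l * qn n E l i) = deg n E i * qn n E i i + (\<Sum>l<n. adj E i l * qn n E l i)"
    by (rule qL[OF i])
  also have "(\<Sum>l<n. adj E i l * qn n E l i) = (\<Sum>l<n. adj E i l)"
    by (rule sum.cong[OF refl], rule adj_q)
  finally show ?thesis by (simp add: qn_def deg_sum power2_eq_square)
qed

lemma Y_off: "i < n \<Longrightarrow> adj E i k * (\<Sum>l<n. qn n E k l * qn n E l i)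
   = adj E i k * (deg n E k + deg n E i + (\<Sum>l<n. adj E k l * adj E l i))"
proof -
  assume i: "i < n"
  show ?thesis
  proof (cases "adj E i k = 0")
    case True then show ?thesis by simp
  next
    case False
    then have "E i k" by (simp add: adj_def split: if_splits)
    then have k: "k < n" and ik: "k \<noteq> i" and a1: "adj E k i = 1"
      using sg by (auto simp: adj_def simple_graph_def)
    have "(\<Sum>l<n. qn n E k l * qn n E l i) = deg n E k * qn n E k i + (\<Sum>l<n. adj E k l * qn n E l i)"
      by (rule qL[OF k])
    also have "(\<Sum>l<n. adj E k l * qn n E l i) = adj E k i * deg n E i + (\<Sum>l<n. adj E k l * adj E l i)"
      by (rule qR[OF i])
    finally show ?thesis using ik a1 by (simp add: qn_def)
  qed
qed

lemma tr1: "(\<Sum>i<n. qn n E i i) = (\<Sum>i<n. deg n E i)"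
  by (simp add: qn_def)

lemma tr2: "(\<Sum>i<n. \<Sum>k<n. qn n E i k * qn n E k i) = (\<Sum>i<n. deg n E i ^ 2) + (\<Sum>i<n. deg n E i)"
  by (simp add: Y_diag sum.distrib)

lemma sum_adj_deg: "(\<Sum>i<n. \<Sum>k<n. adj E i k * deg n E k) = (\<Sum>k<n. deg n E k ^ 2)"
proof -
  have "(\<Sum>i<n. \<Sum>k<n. adj E i k * deg n E k) = (\<Sum>k<n. \<Sum>i<n. adj E k i * deg n E k)"
    by (subst sum.swap) (simp add: adj_sym)
  also have "\<dots> = (\<Sum>k<n. deg n E k * deg n E k)"
    by (simp add: sum_distrib_right[symmetric] deg_sum mult.commute)
  finally show ?thesis by (simp add: power2_eq_square)
qed

lemma tr3: "(\<Sum>i<n. \<Sum>k<n. \<Sum>l<n. qn n E i k * qn n E k l * qn n E l i)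
   = (\<Sum>i<n. deg n E i ^ 3) + 3 * (\<Sum>i<n. deg n E i ^ 2) + Wt n E"
proof -
  have step: "(\<Sum>k<n. \<Sum>l<n. qn n E i k * qn n E k l * qn n E l i)
     = deg n E i ^ 3 + deg n E i ^ 2 + deg n E i * deg n E i
       + (\<Sum>k<n. adj E i k * deg n E k)
       + (\<Sum>k<n. \<Sum>l<n. adj E i k * adj E k l * adj E l i)" if i: "i < n" for i
  proof -
    have "(\<Sum>k<n. \<Sum>l<n. qn n E i k * qn n E k l * qn n E l i)
        = (\<Sum>k<n. qn n E i k * (\<Sum>l<n. qn n E k l * qn n E l i))"
      by (simp add: sum_distrib_left mult.assoc)
    also have "\<dots> = deg n E i * (\<Sum>l<n. qn n E i l * qn n E l i)
        + (\<Sum>k<n. adj E i k * (\<Sum>l<n. qn n E k l * qn n E l i))"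
      by (rule qL[OF i])
    also have "(\<Sum>k<n. adj E i k * (\<Sum>l<n. qn n E k l * qn n E l i))
        = (\<Sum>k<n. adj E i k * (deg n E k + deg n E i + (\<Sum>l<n. adj E k l * adj E l i)))"
      by (rule sum.cong[OF refl], rule Y_off[OF i])
    also have "\<dots> = (\<Sum>k<n. adj E i k * deg n E k + adj E i k * deg n E i
        + (\<Sum>l<n. adj E i k * adj E k l * adj E l i))"
      by (rule sum.cong[OF refl]) (simp add: distrib_left sum_distrib_left mult.assoc)
    also have "\<dots> = (\<Sum>k<n. adj E i k * deg n E k) + (\<Sum>k<n. adj E i k) * deg n E i
        + (\<Sum>k<n. \<Sum>l<n. adj E i k * adj E k l * adj E l i)"
      by (simp only: sum.distrib sum_distrib_right)
    also have "(\<Sum>k<n. adj E i k) = deg n E i" by (simp add: deg_sum)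
    finally have fin: "(\<Sum>k<n. \<Sum>l<n. qn n E i k * qn n E k l * qn n E l i)
       = deg n E i * (deg n E i ^ 2 + deg n E i) + ((\<Sum>k<n. adj E i k * deg n E k) + deg n E i * deg n E i
        + (\<Sum>k<n. \<Sum>l<n. adj E i k * adj E k l * adj E l i))"
      using Y_diag[OF i] by simp
    have ar: "(x::nat) * (x^2 + x) + (a + x * x + w) = x^3 + x^2 + x*x + a + w" for x a w
      by (simp add: power2_eq_square power3_eq_cube algebra_simps)
    show ?thesis unfolding fin ar ..
  qed
  have "(\<Sum>i<n. \<Sum>k<n. \<Sum>l<n. qn n E i k * qn n E k l * qn n E l i)
     = (\<Sum>i<n. deg n E i ^ 3 + deg n E i ^ 2 + deg n E i * deg n E i
       + (\<Sum>k<n. adj E i k * deg n E k)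
       + (\<Sum>k<n. \<Sum>l<n. adj E i k * adj E k l * adj E l i))"
    by (rule sum.cong) (auto simp: step)
  also have "\<dots> = (\<Sum>i<n. deg n E i ^ 3) + 3 * (\<Sum>i<n. deg n E i ^ 2) + Wt n E"
    by (simp add: sum.distrib sum_adj_deg Wt_def power2_eq_square)
  finally show ?thesis .
qed

end

lemma Q_carrier: "Q_matrix n E \<in> carrier_mat n n"
  by (simp add: Q_matrix_def)

lemma Q_entry: "i < n \<Longrightarrow> j < n \<Longrightarrow> Q_matrix n E $$ (i,j) = of_nat (qn n E i j)"
  by (simp add: Q_matrix_def qn_def adj_def)

lemma Q_pow: "Q_matrix n E ^\<^sub>m 1 = Q_matrix n E" "Q_matrix n E ^\<^sub>m 2 = Q_matrix n E * Q_matrix n E"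
  "Q_matrix n E ^\<^sub>m 3 = Q_matrix n E * Q_matrix n E * Q_matrix n E"
  using Q_carrier[of n E] by (simp_all add: numeral_eq_Suc)

lemma trQ:
  assumes sg: "simple_graph n E"
  shows "(\<Sum>i<n. (Q_matrix n E ^\<^sub>m 1) $$ (i,i)) = of_nat (\<Sum>i<n. deg n E i)"
    "(\<Sum>i<n. (Q_matrix n E ^\<^sub>m 2) $$ (i,i)) = of_nat ((\<Sum>i<n. deg n E i ^ 2) + (\<Sum>i<n. deg n E i))"
    "(\<Sum>i<n. (Q_matrix n E ^\<^sub>m 3) $$ (i,i)) = of_nat ((\<Sum>i<n. deg n E i ^ 3) + 3 * (\<Sum>i<n. deg n E i ^ 2) + Wt n E)"
proof -
  let ?Q = "Q_matrix n E"
  note C = Q_carrier[of n E]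
  have QQ: "?Q * ?Q \<in> carrier_mat n n" using C by simp
  show "(\<Sum>i<n. (?Q ^\<^sub>m 1) $$ (i,i)) = of_nat (\<Sum>i<n. deg n E i)"
    by (simp add: Q_pow Q_entry qn_def)
  have "(\<Sum>i<n. (?Q ^\<^sub>m 2) $$ (i,i)) = (\<Sum>i<n. \<Sum>k<n. of_nat (qn n E i k * qn n E k i))"
    unfolding Q_pow by (rule sum.cong[OF refl]) (simp add: mult_entry[OF C C] Q_entry)
  also have "\<dots> = of_nat (\<Sum>i<n. \<Sum>k<n. qn n E i k * qn n E k i)" by simp
  finally show "(\<Sum>i<n. (Q_matrix n E ^\<^sub>m 2) $$ (i,i)) = of_nat ((\<Sum>i<n. deg n E i ^ 2) + (\<Sum>i<n. deg n E i))"
    using tr2[OF sg] by simp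
  have "(\<Sum>i<n. (?Q ^\<^sub>m 3) $$ (i,i)) = (\<Sum>i<n. \<Sum>k<n. \<Sum>l<n. of_nat (qn n E i l * qn n E l k * qn n E k i))"
  proof (rule sum.cong[OF refl])
    fix i assume i: "i \<in> {..<n}"
    have "(?Q * ?Q * ?Q) $$ (i,i) = (\<Sum>k<n. (?Q * ?Q) $$ (i,k) * ?Q $$ (k,i))"
      using mult_entry[OF QQ C] i by simp
    also have "\<dots> = (\<Sum>k<n. (\<Sum>l<n. of_nat (qn n E i l) * of_nat (qn n E l k)) * of_nat (qn n E k i))"
      using i by (intro sum.cong[OF refl]) (simp add: mult_entry[OF C C] Q_entry)
    also have "\<dots> = (\<Sum>k<n. \<Sum>l<n. of_nat (qn n E i l * qn n E l k * qn n E k i))"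
      by (simp add: sum_distrib_right)
    finally show "(?Q ^\<^sub>m 3) $$ (i,i) = (\<Sum>k<n. \<Sum>l<n. of_nat (qn n E i l * qn n E l k * qn n E k i))"
      unfolding Q_pow .
  qed
  also have "\<dots> = of_nat (\<Sum>i<n. \<Sum>k<n. \<Sum>l<n. qn n E i l * qn n E l k * qn n E k i)" by simp
  also have "(\<Sum>i<n. \<Sum>k<n. \<Sum>l<n. qn n E i l * qn n E l k * qn n E k i)
      = (\<Sum>i<n. \<Sum>k<n. \<Sum>l<n. qn n E i k * qn n E k l * qn n E l i)"
    by (rule sum.cong[OF refl], rule sum.swap)
  finally show "(\<Sum>i<n. (Q_matrix n E ^\<^sub>m 3) $$ (i,i)) = of_nat ((\<Sum>i<n. deg n E i ^ 3) + 3 * (\<Sum>i<n. deg n E i ^ 2) + Wt n E)"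
    using tr3[OF sg] by simp
qed

lemma cospectral_facts:
  assumes sg1: "simple_graph m E1" and sg2: "simple_graph n E2"
    and sp: "Q_spectrum m E1 = Q_spectrum n E2"
  shows "m = n" "(\<Sum>i<m. deg m E1 i) = (\<Sum>i<n. deg n E2 i)"
    "(\<Sum>i<m. deg m E1 i ^ 2) = (\<Sum>i<n. deg n E2 i ^ 2)"
    "(\<Sum>i<m. deg m E1 i ^ 3) + Wt m E1 = (\<Sum>i<n. deg n E2 i ^ 3) + Wt n E2"
proof -
  have s: "proots (char_poly (Q_matrix m E1)) = proots (char_poly (Q_matrix n E2))"
    using sp by (simp add: Q_spectrum_def)
  show mn: "m = n" using spec_trace(2)[OF Q_carrier[of m E1]] spec_trace(2)[OF Q_carrier[of n E2]] s by simp
  have t: "(\<Sum>i<m. (Q_matrix m E1 ^\<^sub>m k) $$ (i,i)) = (\<Sum>i<n. (Q_matrix n E2 ^\<^sub>m k) $$ (i,i))" for k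
    using spec_trace(1)[OF Q_carrier[of m E1], of k] spec_trace(1)[OF Q_carrier[of n E2], of k] s by simp
  have e1: "(\<Sum>i<m. deg m E1 i) = (\<Sum>i<n. deg n E2 i)"
    using t[of 1] trQ(1)[OF sg1] trQ(1)[OF sg2] by (simp only: of_nat_eq_iff)
  then show "(\<Sum>i<m. deg m E1 i) = (\<Sum>i<n. deg n E2 i)" .
  have e2: "(\<Sum>i<m. deg m E1 i ^ 2) = (\<Sum>i<n. deg n E2 i ^ 2)"
    using t[of 2] trQ(2)[OF sg1] trQ(2)[OF sg2] e1 by (simp only: of_nat_eq_iff, (simp)?)
  then show "(\<Sum>i<m. deg m E1 i ^ 2) = (\<Sum>i<n. deg n E2 i ^ 2)" .
  show "(\<Sum>i<m. deg m E1 i ^ 3) + Wt m E1 = (\<Sum>i<n. deg n E2 i ^ 3) + Wt n E2"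
    using t[of 3] trQ(3)[OF sg1] trQ(3)[OF sg2] e2 by (simp only: of_nat_eq_iff, (simp)?)
qed

lemma del3:
  fixes T :: "nat \<Rightarrow> nat \<Rightarrow> nat \<Rightarrow> nat"
  assumes n: "0 < n"
  shows "(\<Sum>i<n. \<Sum>k<n. \<Sum>l<n. (if i = 0 then T i k l else 0) + (if k = 0 then T i k l else 0) + (if l = 0 then T i k l else 0))
    = (\<Sum>k<n. \<Sum>l<n. T 0 k l) + (\<Sum>i<n. \<Sum>l<n. T i 0 l) + (\<Sum>i<n. \<Sum>k<n. T i k 0)"
proof -
  have z: "0 \<in> {..<n}" using n by simp
  have a: "(\<Sum>i<n. \<Sum>k<n. \<Sum>l<n. (if i = 0 then T i k l else 0)) = (\<Sum>k<n. \<Sum>l<n. T 0 k l)"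
  proof -
    have "(\<Sum>k<n. \<Sum>l<n. (if i = 0 then T i k l else 0)) = (if i = 0 then (\<Sum>k<n. \<Sum>l<n. T i k l) else 0)" for i
      by (cases "i = 0") simp_all
    then show ?thesis using z by (simp add: sum.delta)
  qed
  have b: "(\<Sum>i<n. \<Sum>k<n. \<Sum>l<n. (if k = 0 then T i k l else 0)) = (\<Sum>i<n. \<Sum>l<n. T i 0 l)"
  proof -
    have "(\<Sum>l<n. (if k = 0 then T i k l else 0)) = (if k = 0 then (\<Sum>l<n. T i k l) else 0)" for i k
      by (cases "k = 0") simp_all
    then show ?thesis using z by (simp add: sum.delta)
  qed
  have c: "(\<Sum>i<n. \<Sum>k<n. \<Sum>l<n. (if l = 0 then T i k l else 0)) = (\<Sum>i<n. \<Sum>k<n. T i k 0)"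
    using z by (simp add: sum.delta)
  show ?thesis using a b c by (simp add: sum.distrib)
qed

context
  fixes n E assumes sg: "simple_graph n E"
begin

lemma pw1: "adj E i k * adj E k l * adj E l i + (if l = k then adj E i k * adj E k i else 0) \<le> adj E i k * adj E l i"
  using sg by (auto simp: adj_def simple_graph_def)

lemma W_upper: "Wt n E + (\<Sum>i<n. deg n E i) \<le> (\<Sum>i<n. deg n E i ^ 2)"
proof -
  have "(\<Sum>k<n. \<Sum>l<n. adj E i k * adj E k l * adj E l i) + deg n E i \<le> deg n E i ^ 2" if i: "i < n" for i
  proof -
    have "(\<Sum>k<n. \<Sum>l<n. adj E i k * adj E k l * adj E l i + (if l = k then adj E i k * adj E k i else 0))
       \<le> (\<Sum>k<n. \<Sum>l<n. adj E i k * adj E l i)"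
      by (intro sum_mono pw1)
    also have "\<dots> = (\<Sum>k<n. adj E i k) * (\<Sum>l<n. adj E i l)"
      by (simp add: sum_product adj_sym[OF sg])
    also have "\<dots> = deg n E i ^ 2" by (simp add: deg_sum power2_eq_square)
    finally have A: "(\<Sum>k<n. \<Sum>l<n. adj E i k * adj E k l * adj E l i + (if l = k then adj E i k * adj E k i else 0))
       \<le> deg n E i ^ 2" .
    have "(\<Sum>k<n. \<Sum>l<n. adj E i k * adj E k l * adj E l i + (if l = k then adj E i k * adj E k i else 0))
       = (\<Sum>k<n. \<Sum>l<n. adj E i k * adj E k l * adj E l i) + (\<Sum>k<n. adj E i k * adj E k i)"
      by (simp add: sum.distrib)
    also have "(\<Sum>k<n. adj E i k * adj E k i) = deg n E i"
      by (simp add: deg_sum adj_sym[OF sg] adj_sq[OF sg])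
    finally show ?thesis using A by simp
  qed
  then have "(\<Sum>i<n. (\<Sum>k<n. \<Sum>l<n. adj E i k * adj E k l * adj E l i) + deg n E i) \<le> (\<Sum>i<n. deg n E i ^ 2)"
    by (intro sum_mono) auto
  then show ?thesis by (simp add: Wt_def sum.distrib)
qed

lemma pw2: "(if i = 0 then adj E i k * adj E k l * adj E l i else 0)
   + (if k = 0 then adj E i k * adj E k l * adj E l i else 0)
   + (if l = 0 then adj E i k * adj E k l * adj E l i else 0) \<le> adj E i k * adj E k l * adj E l i"
  by (cases "i = 0"; cases "k = 0"; cases "l = 0") (auto simp: adj_irr[OF sg])

lemma W_lower:
  assumes n: "0 < n" and cone: "\<And>j. 1 \<le> j \<Longrightarrow> j < n \<Longrightarrow> E 0 j"
  shows "3 * (\<Sum>i<n. deg n E i) \<le> Wt n E + 3 * deg n E 0 + 3 * (n - 1)"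
proof -
  define c where "c x = adj E 0 x" for x
  define X where "X = (\<Sum>x<n. \<Sum>y<n. c x * adj E x y * c y)"
  have z: "0 \<in> {..<n}" using n by simp
  have "(\<Sum>i<n. \<Sum>k<n. \<Sum>l<n. (if i = 0 then adj E i k * adj E k l * adj E l i else 0)
   + (if k = 0 then adj E i k * adj E k l * adj E l i else 0)
   + (if l = 0 then adj E i k * adj E k l * adj E l i else 0)) \<le> Wt n E"
    unfolding Wt_def by (intro sum_mono pw2)
  moreover have "(\<Sum>i<n. \<Sum>k<n. \<Sum>l<n. (if i = 0 then adj E i k * adj E k l * adj E l i else 0)
   + (if k = 0 then adj E i k * adj E k l * adj E l i else 0)
   + (if l = 0 then adj E i k * adj E k l * adj E l i else 0))
   = (\<Sum>k<n. \<Sum>l<n. adj E 0 k * adj E k l * adj E l 0)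
     + (\<Sum>i<n. \<Sum>l<n. adj E i 0 * adj E 0 l * adj E l i)
     + (\<Sum>i<n. \<Sum>k<n. adj E i k * adj E k 0 * adj E 0 i)"
    by (rule del3[OF n])
  moreover have "(\<Sum>k<n. \<Sum>l<n. adj E 0 k * adj E k l * adj E l 0) = X"
    unfolding X_def c_def by (simp add: adj_sym[OF sg])
  moreover have "(\<Sum>i<n. \<Sum>l<n. adj E i 0 * adj E 0 l * adj E l i) = X"
    unfolding X_def c_def by (simp add: adj_sym[OF sg] mult_ac)
  moreover have "(\<Sum>i<n. \<Sum>k<n. adj E i k * adj E k 0 * adj E 0 i) = X"
    unfolding X_def c_def by (simp add: adj_sym[OF sg] mult_ac)
  ultimately have W3: "3 * X \<le> Wt n E" by simp
  have cx: "c x = (if 1 \<le> x \<and> x < n then 1 else 0)" for x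
    using cone sg by (cases "x = 0") (auto simp: c_def adj_def simple_graph_def)
  have row: "(\<Sum>y<n. adj E x y * c y) + adj E x 0 = deg n E x" if x: "x < n" for x
  proof -
    have "(\<Sum>y<n. adj E x y) = (\<Sum>y<n. adj E x y * c y + (if y = 0 then adj E x 0 else 0))"
      by (rule sum.cong[OF refl]) (auto simp: cx)
    also have "\<dots> = (\<Sum>y<n. adj E x y * c y) + adj E x 0" using z by (simp add: sum.distrib)
    finally show ?thesis by (simp add: deg_sum)
  qed
  have "(\<Sum>x<n. c x * deg n E x) = (\<Sum>x<n. c x * ((\<Sum>y<n. adj E x y * c y) + adj E x 0))"
    by (rule sum.cong[OF refl]) (simp add: row)
  also have "\<dots> = (\<Sum>x<n. (\<Sum>y<n. c x * adj E x y * c y) + c x * adj E x 0)"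
    by (rule sum.cong[OF refl]) (simp add: distrib_left sum_distrib_left mult.assoc)
  also have "\<dots> = X + (\<Sum>x<n. c x * adj E x 0)"
    by (simp only: X_def sum.distrib)
  also have "(\<Sum>x<n. c x * adj E x 0) \<le> n - 1"
  proof -
    have "(\<Sum>x<n. c x * adj E x 0) \<le> (\<Sum>x\<in>{..<n}-{0}. 1)"
    proof -
      have "(\<Sum>x<n. c x * adj E x 0) = (\<Sum>x\<in>{..<n}-{0}. c x * adj E x 0)"
        using z by (simp add: sum.remove cx)
      also have "\<dots> \<le> (\<Sum>x\<in>{..<n}-{0}. 1)" by (intro sum_mono) (auto simp: cx adj_def)
      finally show ?thesis .
    qed
    then show ?thesis using z by simp
  qed
  finally have A: "(\<Sum>x<n. c x * deg n E x) \<le> X + (n - 1)" by simp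
  have "(\<Sum>x<n. deg n E x) = deg n E 0 + (\<Sum>x<n. c x * deg n E x)"
  proof -
    have "(\<Sum>x<n. deg n E x) = (\<Sum>x<n. c x * deg n E x + (if x = 0 then deg n E 0 else 0))"
      by (rule sum.cong[OF refl]) (auto simp: cx)
    then show ?thesis using z by (simp add: sum.distrib)
  qed
  then show ?thesis using A W3 by linarith
qed

end

lemma sum3_card:
  fixes P :: "nat \<Rightarrow> nat \<Rightarrow> nat \<Rightarrow> bool"
  shows "(\<Sum>i<n. \<Sum>k<n. \<Sum>l<n. (if P i k l then 1 else 0 :: nat))
     = card {(i,k,l). i < n \<and> k < n \<and> l < n \<and> P i k l}"
proof -
  have "(\<Sum>i<n. \<Sum>k<n. \<Sum>l<n. (if P i k l then 1 else 0 :: nat))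
      = (\<Sum>i<n. \<Sum>(k,l)\<in>{..<n} \<times> {..<n}. (if P i k l then 1 else 0 :: nat))"
    by (rule sum.cong[OF refl], rule sum.cartesian_product)
  also have "\<dots> = (\<Sum>(i,k,l)\<in>{..<n} \<times> {..<n} \<times> {..<n}. (if P i k l then 1 else 0 :: nat))"
    by (subst sum.cartesian_product) (simp add: case_prod_beta)
  also have "\<dots> = card ({..<n} \<times> {..<n} \<times> {..<n} \<inter> {x. P (fst x) (fst (snd x)) (snd (snd x))})"
    by (simp add: sum.If_cases case_prod_beta)
  also have "{..<n} \<times> {..<n} \<times> {..<n} \<inter> {x. P (fst x) (fst (snd x)) (snd (snd x))} = {(i,k,l). i < n \<and> k < n \<and> l < n \<and> P i k l}"
    by auto
  finally show ?thesis .
qed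

lemma Wt_triangles:
  assumes sg: "simple_graph n E"
  shows "Wt n E = 6 * triangles n E"
proof -
  define OT where "OT = {(i,k,l). i < n \<and> k < n \<and> l < n \<and> E i k \<and> E k l \<and> E l i}"
  define TS where "TS = {T. T \<subseteq> {0..<n} \<and> card T = 3 \<and> (\<forall>x\<in>T. \<forall>y\<in>T. x \<noteq> y \<longrightarrow> E x y)}"
  define ts :: "nat \<times> nat \<times> nat \<Rightarrow> nat set" where "ts p = (case p of (i,k,l) \<Rightarrow> {i,k,l})" for p
  have sym: "E x y \<Longrightarrow> E y x" for x y using sg by (auto simp: simple_graph_def)
  have irr: "\<not> E x x" for x using sg by (auto simp: simple_graph_def)
  have W: "Wt n E = card OT"
    unfolding Wt_def OT_def
    by (subst sum3_card[symmetric]) (intro sum.cong refl, simp add: adj_def)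
  have finOT: "finite OT"
    by (rule finite_subset[of _ "{..<n} \<times> {..<n} \<times> {..<n}"]) (auto simp: OT_def)
  have finTS: "finite TS"
    by (rule finite_subset[of _ "Pow {0..<n}"]) (auto simp: TS_def)
  have OTU: "OT = (\<Union>T\<in>TS. {p\<in>OT. ts p = T})"
  proof
    show "OT \<subseteq> (\<Union>T\<in>TS. {p\<in>OT. ts p = T})"
    proof
      fix p assume p: "p \<in> OT"
      obtain i k l where pe: "p = (i,k,l)" by (cases p) auto
      have h: "i < n" "k < n" "l < n" "E i k" "E k l" "E l i" using p pe by (auto simp: OT_def)
      have d: "i \<noteq> k" "k \<noteq> l" "l \<noteq> i" using h irr by auto
      have "ts p \<in> TS" unfolding TS_def ts_def pe using h d by (auto intro: sym)
      then show "p \<in> (\<Union>T\<in>TS. {p\<in>OT. ts p = T})" using p by auto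
    qed
  qed auto
  have fib: "card {p\<in>OT. ts p = T} = 6" if T: "T \<in> TS" for T
  proof -
    have T': "T \<subseteq> {0..<n}" "card T = 3" "\<forall>x\<in>T. \<forall>y\<in>T. x \<noteq> y \<longrightarrow> E x y" using T by (auto simp: TS_def)
    then obtain x y z where xyz: "T = {x,y,z}" "x \<noteq> y" "y \<noteq> z" "x \<noteq> z"
      by (auto simp: card_3_iff)
    have e: "{p\<in>OT. ts p = T} = {(x,y,z),(x,z,y),(y,x,z),(y,z,x),(z,x,y),(z,y,x)}"
    proof
      show "{p\<in>OT. ts p = T} \<subseteq> {(x,y,z),(x,z,y),(y,x,z),(y,z,x),(z,x,y),(z,y,x)}"
      proof
        fix p assume p: "p \<in> {p\<in>OT. ts p = T}"
        obtain i k l where pe: "p = (i,k,l)" by (cases p) auto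
        have h: "E i k" "E k l" "E l i" "{i,k,l} = {x,y,z}" using p pe xyz by (auto simp: OT_def ts_def)
        have d: "i \<noteq> k" "k \<noteq> l" "l \<noteq> i" using h irr by auto
        have m: "i \<in> {x,y,z}" "k \<in> {x,y,z}" "l \<in> {x,y,z}" using h(4) by blast+
        show "p \<in> {(x,y,z),(x,z,y),(y,x,z),(y,z,x),(z,x,y),(z,y,x)}"
          using m d xyz(2-4) h(4) unfolding pe by auto
      qed
      show "{(x,y,z),(x,z,y),(y,x,z),(y,z,x),(z,x,y),(z,y,x)} \<subseteq> {p\<in>OT. ts p = T}"
        using T' xyz by (auto simp: OT_def ts_def)
    qed
    show ?thesis unfolding e using xyz(2-4) by simp
  qed
  have "card OT = (\<Sum>T\<in>TS. card {p\<in>OT. ts p = T})"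
    by (subst OTU, rule card_UN_disjoint) (use finTS finOT in auto)
  also have "\<dots> = (\<Sum>T\<in>TS. 6)" by (rule sum.cong[OF refl]) (rule fib)
  also have "\<dots> = 6 * card TS" by simp
  finally show ?thesis using W by (simp add: triangles_def TS_def)
qed

context
  fixes s q n :: nat
  assumes s3: "s \<ge> 3" and q1: "q \<ge> 1" and nd: "n = 1 + s + 2 * q"
begin

lemma G_simple: "simple_graph n (G_adj s q)"
  unfolding simple_graph_def G_adj_def cone_adj_def cycle_adj_def match_adj_def
  using s3 q1 nd by auto

lemma G_cone: "1 \<le> j \<Longrightarrow> j < n \<Longrightarrow> G_adj s q 0 j"
  using nd by (auto simp: G_adj_def cone_adj_def)

lemma G_deg0: "deg n (G_adj s q) 0 = s + 2 * q"
proof -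
  have "{j. j < n \<and> G_adj s q 0 j} = {1..s + 2 * q}"
    using nd by (auto simp: G_adj_def cone_adj_def cycle_adj_def match_adj_def)
  then show ?thesis by (simp add: deg_def)
qed

lemma G_deg_cycle:
  assumes i: "1 \<le> i" "i \<le> s"
  shows "deg n (G_adj s q) i = 3"
proof -
  have nm: "\<not> match_adj s q i j" for j
    using i by (auto simp: match_adj_def)
  have nm2: "G_adj s q i j \<longleftrightarrow> (j = 0 \<or> cycle_adj s i j)" for j
    using i nd nm[of j] by (auto simp: G_adj_def cone_adj_def)
  have NB: "{j. j < n \<and> G_adj s q i j} = {j. j < n \<and> (j = 0 \<or> cycle_adj s i j)}"
    using nm2 by auto
  consider "i = 1" | "i = s" | "1 < i \<and> i < s" using i by linarith
  then show ?thesis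
  proof cases
    case 1
    have "{j. j < n \<and> (j = 0 \<or> cycle_adj s i j)} = {0, 2, s}"
      using 1 s3 nd by (auto simp: cycle_adj_def)
    then show ?thesis using s3 NB by (simp add: deg_def)
  next
    case 2
    have "{j. j < n \<and> (j = 0 \<or> cycle_adj s i j)} = {0, s - 1, 1}"
      using 2 s3 nd by (auto simp: cycle_adj_def)
    then show ?thesis using s3 NB by (simp add: deg_def)
  next
    case 3
    have "{j. j < n \<and> (j = 0 \<or> cycle_adj s i j)} = {0, i - 1, i + 1}"
      using 3 s3 nd by (auto simp: cycle_adj_def)
    then show ?thesis using 3 NB by (simp add: deg_def)
  qed
qed

lemma G_deg_match:
  assumes i: "s < i" "i \<le> s + 2 * q"
  shows "deg n (G_adj s q) i = 2"
proof -
  define p where "p = (if odd (i - s) then i + 1 else i - 1)"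
  have nc: "\<not> cycle_adj s i j" for j using i by (auto simp: cycle_adj_def)
  have mt: "match_adj s q i j \<longleftrightarrow> j = p" for j
  proof
    assume "match_adj s q i j"
    then obtain k where k: "1 \<le> k" "k \<le> q"
      "(i = s + 2*k - 1 \<and> j = s + 2*k) \<or> (j = s + 2*k - 1 \<and> i = s + 2*k)"
      by (auto simp: match_adj_def)
    from k(3) show "j = p"
    proof
      assume h: "i = s + 2*k - 1 \<and> j = s + 2*k"
      then have "i - s = 2*(k-1) + 1" using k(1) by simp
      then have "odd (i - s)" by simp
      then show "j = p" using h k(1) by (simp add: p_def)
    next
      assume h: "j = s + 2*k - 1 \<and> i = s + 2*k"
      then have "i - s = 2*k" by simp
      then have "\<not> odd (i - s)" by simp
      then show "j = p" using h k(1) by (simp add: p_def)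
    qed
  next
    assume jp: "j = p"
    show "match_adj s q i j"
    proof (cases "odd (i - s)")
      case True
      then obtain k where k: "i - s = 2 * k + 1" by (meson oddE)
      show ?thesis unfolding match_adj_def
        using True k i jp p_def by (intro exI[of _ "k + 1"]) auto
    next
      case False
      then obtain k where k: "i - s = 2 * k" by (meson evenE)
      then have "k \<ge> 1" using i by simp
      show ?thesis unfolding match_adj_def
        using False k i jp p_def `k \<ge> 1` by (intro exI[of _ "k"]) auto
    qed
  qed
  have "{j. j < n \<and> G_adj s q i j} = {0, p}"
  proof -
    have pn: "p < n" "p \<noteq> 0"
    proof -
      show "p \<noteq> 0" using i s3 by (simp add: p_def)
      show "p < n"
      proof (cases "odd (i - s)")
        case True
        then have "i \<noteq> s + 2 * q" using i by auto
        then show ?thesis using True i nd by (simp add: p_def)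
      next
        case False then show ?thesis using i nd by (simp add: p_def)
      qed
    qed
    show ?thesis
      using i nd pn by (auto simp: G_adj_def cone_adj_def nc mt)
  qed
  moreover have "p \<noteq> 0" using i s3 by (simp add: p_def)
  ultimately show ?thesis by (simp add: deg_def)
qed

end

lemma f_nonneg: "0 \<le> ((x::int) - 2) * (x - 3)"
proof (cases "x \<le> 2")
  case True then show ?thesis by (intro mult_nonpos_nonpos) auto
next
  case False then show ?thesis by (intro mult_nonneg_nonneg) auto
qed

lemma f_zero: "((x::int) - 2) * (x - 3) = 0 \<Longrightarrow> x = 2 \<or> x = 3"
  by auto

lemma key_arith:
  fixes x :: "nat \<Rightarrow> int" and N q :: int and n :: nat
  assumes N: "N \<ge> 15" and q: "q \<ge> 1" and nN: "int n = N + 1"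
    and bnd: "\<And>i. i < n \<Longrightarrow> 0 \<le> x i \<and> x i \<le> N"
    and S1: "(\<Sum>i<n. x i) = 4 * N - 2 * q"
    and S2: "(\<Sum>i<n. x i ^ 2) = N ^ 2 + 9 * N - 10 * q"
    and S3: "(\<Sum>i<n. x i ^ 3) \<ge> N ^ 3 - N ^ 2 + 28 * N - 36 * q"
  shows "\<exists>i0<n. x i0 = N \<and> (\<forall>i<n. i \<noteq> i0 \<longrightarrow> x i = 2 \<or> x i = 3)"
proof -
  define f where "f y = (y - 2) * (y - 3)" for y :: int
  have f0: "0 \<le> f y" for y unfolding f_def by (rule f_nonneg)
  have sn: "(\<Sum>i<n. (1::int)) = N + 1" using nN by simp
  have F: "(\<Sum>i<n. f (x i)) = (N - 2) * (N - 3)"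
  proof -
    have "(\<Sum>i<n. f (x i)) = (\<Sum>i<n. x i ^ 2) - 5 * (\<Sum>i<n. x i) + 6 * (\<Sum>i<n. (1::int))"
      by (simp add: f_def sum_subtractf sum.distrib sum_distrib_left sum_distrib_right algebra_simps power2_eq_square)
    then show ?thesis using S1 S2 sn by (simp add: algebra_simps power2_eq_square)
  qed
  have P: "(\<Sum>i<n. f (x i) * (N - x i)) \<le> N ^ 2 - N - 2 * q"
  proof -
    have "(\<Sum>i<n. f (x i) * (N - x i)) = - (\<Sum>i<n. x i ^ 3) + (N + 5) * (\<Sum>i<n. x i ^ 2)
        - (5 * N + 6) * (\<Sum>i<n. x i) + 6 * N * (\<Sum>i<n. (1::int))"
      by (simp add: f_def sum_subtractf sum.distrib sum_distrib_left sum_distrib_right algebra_simps power2_eq_square power3_eq_cube sum_negf)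
    also have "\<dots> \<le> - (N ^ 3 - N ^ 2 + 28 * N - 36 * q) + (N + 5) * (N ^ 2 + 9 * N - 10 * q)
        - (5 * N + 6) * (4 * N - 2 * q) + 6 * N * (N + 1)"
      using S1 S2 S3 sn by simp
    also have "\<dots> = N ^ 2 - N - 2 * q"
      by (simp add: algebra_simps power2_eq_square power3_eq_cube)
    finally show ?thesis .
  qed
  show ?thesis
  proof (cases "\<exists>i0<n. x i0 = N")
    case True
    then obtain i0 where i0: "i0 < n" "x i0 = N" by blast
    have "(\<Sum>i<n. f (x i)) = f (x i0) + (\<Sum>i\<in>{..<n}-{i0}. f (x i))"
      using i0 by (simp add: sum.remove)
    then have "(\<Sum>i\<in>{..<n}-{i0}. f (x i)) = 0" using F i0 by (simp add: f_def)
    then have "\<forall>i\<in>{..<n}-{i0}. f (x i) = 0"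
      using sum_nonneg_eq_0_iff[of "{..<n}-{i0}" "\<lambda>i. f (x i)"] f0 by simp
    then show ?thesis using i0 by (auto simp: f_def)
  next
    case False
    then have lt: "x i \<le> N - 1" if "i < n" for i using bnd[OF that] that by force
    define B where "B = {i. i < n \<and> N - 3 \<le> x i}"
    have fB: "(N - 5) * (N - 6) \<le> f (x i)" if "i \<in> B" for i
    proof -
      have h: "N - 3 \<le> x i" using that by (simp add: B_def)
      have "f (x i) - (N - 5) * (N - 6) = (x i - (N - 3)) * (x i + N - 8)"
        by (simp add: f_def algebra_simps)
      also have "\<dots> \<ge> 0" using h N by (intro mult_nonneg_nonneg) auto
      finally show ?thesis by simp
    qed
    have fB2: "f (x i) \<le> (N - 3) * (N - 4)" if "i \<in> B" for i
    proof -
      have h: "N - 3 \<le> x i" "x i \<le> N - 1" using that lt by (auto simp: B_def)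
      have "(N - 3) * (N - 4) - f (x i) = (N - 1 - x i) * (N - 6 + x i)"
        by (simp add: f_def algebra_simps)
      also have "\<dots> \<ge> 0" using h N by (intro mult_nonneg_nonneg) auto
      finally show ?thesis by simp
    qed
    have cardB: "card B \<le> 1"
    proof (rule ccontr)
      assume "\<not> card B \<le> 1"
      moreover have "finite B" by (rule finite_subset[of _ "{..<n}"]) (auto simp: B_def)
      ultimately obtain i j where ij: "i \<in> B" "j \<in> B" "i \<noteq> j"
        using card_le_Suc0_iff_eq[of B] by auto
      have sub: "{i, j} \<subseteq> {..<n}" using ij by (auto simp: B_def)
      have "f (x i) + f (x j) = (\<Sum>k\<in>{i,j}. f (x k))" using ij by simp
      also have "\<dots> \<le> (\<Sum>k<n. f (x k))" by (rule sum_mono2[OF _ sub]) (auto simp: f0)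
      finally have "f (x i) + f (x j) \<le> (N - 2) * (N - 3)" using F by simp
      moreover have "2 * ((N - 5) * (N - 6)) > (N - 2) * (N - 3)"
      proof -
        have "2 * ((N - 5) * (N - 6)) - (N - 2) * (N - 3) = (N - 14) * (N - 3) + 12"
          by (simp add: algebra_simps)
        moreover have "(N - 14) * (N - 3) \<ge> 0" using N by (intro mult_nonneg_nonneg) auto
        ultimately show ?thesis by simp
      qed
      ultimately show False using fB[OF ij(1)] fB[OF ij(2)] by simp
    qed
    define g where "g i = (if i \<in> B then f (x i) else 0)" for i
    have pw: "4 * f (x i) - 3 * g i \<le> f (x i) * (N - x i)" if i: "i < n" for i
    proof (cases "i \<in> B")
      case True
      have "f (x i) * 1 \<le> f (x i) * (N - x i)" using lt[OF i] f0[of "x i"]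
        by (intro mult_left_mono) auto
      then show ?thesis using True by (simp add: g_def)
    next
      case False
      then have "x i \<le> N - 4" using i by (auto simp: B_def)
      then have "f (x i) * 4 \<le> f (x i) * (N - x i)" using f0[of "x i"]
        by (intro mult_left_mono) auto
      then show ?thesis using False by (simp add: g_def)
    qed
    have G: "(\<Sum>i<n. g i) \<le> (N - 3) * (N - 4)"
    proof -
      have Bsub: "B \<subseteq> {..<n}" by (auto simp: B_def)
      have "(\<Sum>i<n. g i) = (\<Sum>i\<in>B. f (x i))"
      proof -
        have e1: "{..<n} \<inter> B = B" "B \<inter> {..<n} = B" using Bsub by auto
        show ?thesis by (simp add: g_def sum.If_cases e1)
      qed
      also have "\<dots> \<le> (N - 3) * (N - 4)"
      proof (cases "B = {}")
        case True then show ?thesis using N by simp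
      next
        case False
        then obtain b where "b \<in> B" by blast
        then have "B = {b}" using cardB
          by (metis card_le_Suc0_iff_eq finite_subset Bsub finite_lessThan One_nat_def singleton_iff subsetI equalityI)
        then show ?thesis using fB2 `b \<in> B` by simp
      qed
      finally show ?thesis .
    qed
    have "(\<Sum>i<n. 4 * f (x i) - 3 * g i) \<le> (\<Sum>i<n. f (x i) * (N - x i))"
      by (intro sum_mono pw) auto
    then have "4 * (\<Sum>i<n. f (x i)) - 3 * (\<Sum>i<n. g i) \<le> N ^ 2 - N - 2 * q"
      using P by (simp add: sum_subtractf sum_distrib_left)
    then have "4 * ((N - 2) * (N - 3)) - 3 * ((N - 3) * (N - 4)) \<le> N ^ 2 - N - 2 * q"
      using F G by linarith
    then show ?thesis using N q by (simp add: algebra_simps power2_eq_square)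
  qed
qed

lemma cnt_sum_nat: "(\<Sum>i<(n::nat). (if P i then c else 0 :: nat)) = c * card {i. i < n \<and> P i}"
proof -
  have A: "(\<Sum>i\<in>{..<n} \<inter> {i. P i}. c) = (\<Sum>i<n. if i \<in> {i. P i} then c else 0)"
    by (rule sum.inter_restrict) simp
  have B: "{..<n} \<inter> {i. P i} = {i. i < n \<and> P i}" by auto
  show ?thesis using A unfolding B by (simp add: mult.commute)
qed

lemma count23:
  fixes d :: "nat \<Rightarrow> nat" and n N s q i0 :: nat
  assumes i0: "i0 < n" "d i0 = N" and N23: "N \<noteq> 2" "N \<noteq> 3"
    and oth: "\<And>i. i < n \<Longrightarrow> i \<noteq> i0 \<Longrightarrow> d i = 2 \<or> d i = 3"
    and S: "(\<Sum>i<n. d i) = N + 3 * s + 4 * q" and nN: "n = N + 1" and Nd: "N = s + 2 * q"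
  shows "card {i. i < n \<and> d i = 3} = s" "card {i. i < n \<and> d i = 2} = 2 * q"
proof -
  have "{i. i < n \<and> i = i0} = {i0}" using i0 by auto
  then have ci0: "card {i. i < n \<and> i = i0} = 1" by simp
  have "(\<Sum>i<n. d i) = (\<Sum>i<n. (if i = i0 then N else 0) + (if d i = 3 then 3 else 0) + (if d i = 2 then 2 else 0))"
  proof (rule sum.cong[OF refl])
    fix i assume "i \<in> {..<n}"
    then show "d i = (if i = i0 then N else 0) + (if d i = 3 then 3 else 0) + (if d i = 2 then 2 else 0)"
      using oth[of i] i0 N23 by auto
  qed
  also have "\<dots> = N + 3 * card {i. i < n \<and> d i = 3} + 2 * card {i. i < n \<and> d i = 2}"
    by (simp only: sum.distrib cnt_sum_nat ci0, (simp)?)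
  finally have E1: "N + 3 * s + 4 * q = N + 3 * card {i. i < n \<and> d i = 3} + 2 * card {i. i < n \<and> d i = 2}"
    using S by simp
  have "(\<Sum>i<n. (1::nat)) = (\<Sum>i<n. (if i = i0 then 1 else 0) + (if d i = 3 then 1 else 0) + (if d i = 2 then 1 else 0))"
  proof (rule sum.cong[OF refl])
    fix i assume "i \<in> {..<n}"
    then show "(1::nat) = (if i = i0 then 1 else 0) + (if d i = 3 then 1 else 0) + (if d i = 2 then 1 else 0)"
      using oth[of i] i0 N23 by auto
  qed
  also have "\<dots> = 1 + 1 * card {i. i < n \<and> d i = 3} + 1 * card {i. i < n \<and> d i = 2}"
    by (simp only: sum.distrib cnt_sum_nat ci0, (simp)?)
  finally have E2: "n = 1 + card {i. i < n \<and> d i = 3} + card {i. i < n \<and> d i = 2}" by simp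
  show "card {i. i < n \<and> d i = 3} = s" using E1 E2 nN Nd by linarith
  show "card {i. i < n \<and> d i = 2} = 2 * q" using E1 E2 nN Nd by linarith
qed

lemma deg_le: "simple_graph n E \<Longrightarrow> i < n \<Longrightarrow> deg n E i \<le> n - 1"
proof -
  assume sg: "simple_graph n E" and i: "i < n"
  have "{j. j < n \<and> E i j} \<subseteq> {..<n} - {i}" using sg by (auto simp: simple_graph_def)
  then have "card {j. j < n \<and> E i j} \<le> card ({..<n} - {i})" by (intro card_mono) auto
  then show ?thesis using i by (simp add: deg_def)
qed

lemma count_map_upt: "count (mset (map f [0..<n])) v = card {i. i < n \<and> f i = v}"
proof -
  have "count (mset (map f [0..<n])) v = length (filter (\<lambda>x. v = x) (map f [0..<n]))"
    by (simp only: count_mset count_list_eq_length_filter)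
  also have "\<dots> = card {i. i < length (map f [0..<n]) \<and> v = (map f [0..<n]) ! i}"
    by (rule length_filter_conv_card)
  also have "{i. i < length (map f [0..<n]) \<and> v = (map f [0..<n]) ! i} = {i. i < n \<and> f i = v}"
    by auto
  finally show ?thesis .
qed

lemma sum_map_upt: "(\<Sum>i<n. h (f i)) = (\<Sum>x\<in>#mset (map f [0..<n]). h x)"
proof -
  have "(\<Sum>x\<in>#mset (map f [0..<n]). h x) = sum_list (map h (map f [0..<n]))"
    by (metis mset_map sum_mset_sum_list)
  also have "\<dots> = sum_list (map (\<lambda>i. h (f i)) [0..<n])" by (simp add: o_def)
  also have "\<dots> = (\<Sum>i<n. h (f i))"
    by (simp add: interv_sum_list_conv_sum_set_nat atLeast0LessThan)
  finally show ?thesis by simp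
qed

lemma cnt_sum: "(\<Sum>i<(n::nat). (if P i then 1 else 0 :: int)) = int (card {i. i < n \<and> P i})"
proof -
  have A: "(\<Sum>i\<in>{..<n} \<inter> {i. P i}. (1::int)) = (\<Sum>i<n. if i \<in> {i. P i} then 1 else 0)"
    by (rule sum.inter_restrict) simp
  have B: "{..<n} \<inter> {i. P i} = {i. i < n \<and> P i}" by auto
  show ?thesis using A unfolding B by simp
qed

lemma split3:
  fixes n s q :: nat
  assumes "n = 1 + s + 2 * q"
  shows "(\<Sum>i<n. g i) = g 0 + (\<Sum>i\<in>{1..<s+1}. g i) + (\<Sum>i\<in>{s+1..<n}. g i)"
proof -
  have "(\<Sum>i<n. g i) = (\<Sum>i\<in>{0..<n}. g i)" by (simp add: lessThan_atLeast0)
  also have "\<dots> = (\<Sum>i\<in>{0..<1}. g i) + (\<Sum>i\<in>{1..<n}. g i)"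
    by (rule sum.atLeastLessThan_concat[symmetric]) (use assms in auto)
  also have "(\<Sum>i\<in>{1..<n}. g i) = (\<Sum>i\<in>{1..<s+1}. g i) + (\<Sum>i\<in>{s+1..<n}. g i)"
    by (rule sum.atLeastLessThan_concat[symmetric]) (use assms in auto)
  finally have F: "(\<Sum>i<n. g i) = (\<Sum>i\<in>{0..<1}. g i) + ((\<Sum>i\<in>{1..<s+1}. g i) + (\<Sum>i\<in>{s+1..<n}. g i))" .
  have h0: "(\<Sum>i\<in>{0..<1}. g i) = g 0" by simp
  show ?thesis unfolding F h0 by (simp only: add.assoc)
qed

lemma lin_help:
  fixes S WH A WG s q N B :: int
  assumes "S + WH = A + 27 * s + 16 * q + WG" "3 * (N + 3 * s + 4 * q) \<le> WG + 6 * N"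
    "WH + (N + 3 * s + 4 * q) \<le> B + 9 * s + 8 * q" "s = N - 2 * q"
  shows "A - B + 28 * N - 36 * q \<le> S"
  using assms by simp

theorem lemma4p1:
  fixes q s n m :: nat and EH :: "nat \<Rightarrow> nat \<Rightarrow> bool"
  assumes "q \<ge> 1" and "s \<ge> 3"
    and "n = 1 + s + 2 * q" and "n \<ge> 16"
    and "simple_graph m EH"
    and "Q_spectrum m EH = Q_spectrum n (G_adj s q)"
  shows "degree_sequence m EH = degree_sequence n (G_adj s q)
       \<and> triangles m EH = triangles n (G_adj s q)"
proof -
  note q1 = assms(1) and s3 = assms(2) and nd = assms(3) and n16 = assms(4)
  define G where "G = G_adj s q"
  define N where "N = s + 2 * q"
  have nN: "n = N + 1" using nd by (simp add: N_def)
  have N15: "N \<ge> 15" using n16 nN by simp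
  have sgG: "simple_graph n G" unfolding G_def by (rule G_simple[OF s3 q1 nd])
  have sp: "Q_spectrum m EH = Q_spectrum n G" using assms(6) by (simp add: G_def)
  note cf = cospectral_facts[OF assms(5) sgG sp]
  have mn: "m = n" by (rule cf(1))
  have sgH: "simple_graph n EH" using assms(5) mn by simp
  define dH where "dH i = deg n EH i" for i
  define dG where "dG i = deg n G i" for i
  have e1: "(\<Sum>i<n. dH i) = (\<Sum>i<n. dG i)" using cf(2) mn by (simp add: dH_def dG_def)
  have e2: "(\<Sum>i<n. dH i ^ 2) = (\<Sum>i<n. dG i ^ 2)" using cf(3) mn by (simp add: dH_def dG_def)
  have e3: "(\<Sum>i<n. dH i ^ 3) + Wt n EH = (\<Sum>i<n. dG i ^ 3) + Wt n G" using cf(4) mn by (simp add: dH_def dG_def)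
  have dGv: "dG i = (if i = 0 then N else if i \<le> s then 3 else 2)" if i: "i < n" for i
  proof -
    consider "i = 0" | "1 \<le> i \<and> i \<le> s" | "s < i \<and> i \<le> s + 2 * q" using i nd by linarith
    then show ?thesis
    proof cases
      case 1 then show ?thesis using G_deg0[OF s3 q1 nd] by (simp add: dG_def G_def N_def)
    next
      case 2 then show ?thesis using G_deg_cycle[OF s3 q1 nd, of i] by (simp add: dG_def G_def)
    next
      case 3 then show ?thesis using G_deg_match[OF s3 q1 nd, of i] by (simp add: dG_def G_def)
    qed
  qed
  have GS: "(\<Sum>i<n. h (dG i)) = h N + s * h 3 + 2 * q * h 2" for h :: "nat \<Rightarrow> nat"
  proof -
    have a: "(\<Sum>i\<in>{1..<s+1}. h (dG i)) = s * h 3"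
    proof -
      have "(\<Sum>i\<in>{1..<s+1}. h (dG i)) = (\<Sum>i\<in>{1..<s+1}. h 3)"
        by (rule sum.cong[OF refl]) (simp add: dGv nd)
      then show ?thesis by simp
    qed
    have b: "(\<Sum>i\<in>{s+1..<n}. h (dG i)) = 2 * q * h 2"
    proof -
      have "(\<Sum>i\<in>{s+1..<n}. h (dG i)) = (\<Sum>i\<in>{s+1..<n}. h 2)"
        by (rule sum.cong[OF refl]) (simp add: dGv)
      then show ?thesis using nd by simp
    qed
    show ?thesis using split3[OF nd, of "\<lambda>i. h (dG i)"] a b dGv[of 0] nd by simp
  qed
  have SG1: "(\<Sum>i<n. dG i) = N + 3 * s + 4 * q" using GS[of "\<lambda>x. x"] by simp
  have SG2: "(\<Sum>i<n. dG i ^ 2) = N ^ 2 + 9 * s + 8 * q" using GS[of "\<lambda>x. x ^ 2"] by simp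
  have SG3: "(\<Sum>i<n. dG i ^ 3) = N ^ 3 + 27 * s + 16 * q" using GS[of "\<lambda>x. x ^ 3"] by simp
  have WG: "3 * (\<Sum>i<n. dG i) \<le> Wt n G + 3 * N + 3 * N"
  proof -
    have "3 * (\<Sum>i<n. deg n G i) \<le> Wt n G + 3 * deg n G 0 + 3 * (n - 1)"
      by (rule W_lower[OF sgG]) (use nd G_cone[OF s3 q1 nd] in \<open>auto simp: G_def\<close>)
    moreover have "deg n G 0 = N" using dGv[of 0] nd by (simp add: dG_def)
    ultimately show ?thesis using nN by (simp add: dG_def)
  qed
  have WH: "Wt n EH + (\<Sum>i<n. dH i) \<le> (\<Sum>i<n. dH i ^ 2)"
    using W_upper[OF sgH] by (simp add: dH_def)
  define x where "x i = int (dH i)" for i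
  have key: "\<exists>i0<n. x i0 = int N \<and> (\<forall>i<n. i \<noteq> i0 \<longrightarrow> x i = 2 \<or> x i = 3)"
  proof (rule key_arith[where q = "int q"])
    show "int N \<ge> 15" using N15 by simp
    show "int q \<ge> 1" using q1 by simp
    show "int n = int N + 1" using nN by simp
    show "0 \<le> x i \<and> x i \<le> int N" if "i < n" for i
      using deg_le[OF sgH that] nN by (simp add: x_def dH_def)
    have s_eq: "int s = int N - 2 * int q" by (simp add: N_def)
    have i1: "int (\<Sum>i<n. dH i) = int N + 3 * int s + 4 * int q" using e1 SG1 by simp
    show "(\<Sum>i<n. x i) = 4 * int N - 2 * int q" using i1 s_eq by (simp add: x_def)
    have i2: "int (\<Sum>i<n. dH i ^ 2) = int N ^ 2 + 9 * int s + 8 * int q" using e2 SG2 by simp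
    show "(\<Sum>i<n. x i ^ 2) = int N ^ 2 + 9 * int N - 10 * int q" using i2 s_eq by (simp add: x_def)
    have i3: "int (\<Sum>i<n. dH i ^ 3) + int (Wt n EH) = int N ^ 3 + 27 * int s + 16 * int q + int (Wt n G)"
    proof -
      have "(\<Sum>i<n. dH i ^ 3) + Wt n EH = N ^ 3 + 27 * s + 16 * q + Wt n G" using e3 SG3 by simp
      then have "int ((\<Sum>i<n. dH i ^ 3) + Wt n EH) = int (N ^ 3 + 27 * s + 16 * q + Wt n G)" by (rule arg_cong)
      then show ?thesis by (simp only: of_nat_add of_nat_mult of_nat_power of_nat_numeral)
    qed
    have nWG: "3 * (N + 3 * s + 4 * q) \<le> Wt n G + 6 * N" using WG SG1 by simp
    have "int (3 * (N + 3 * s + 4 * q)) \<le> int (Wt n G + 6 * N)" using nWG by (simp only: of_nat_le_iff)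
    then have iWG: "3 * (int N + 3 * int s + 4 * int q) \<le> int (Wt n G) + 6 * int N" by simp
    have iWH: "int (Wt n EH) + (int N + 3 * int s + 4 * int q) \<le> int N ^ 2 + 9 * int s + 8 * int q"
    proof -
      have "int (Wt n EH + (\<Sum>i<n. dH i)) \<le> int (\<Sum>i<n. dH i ^ 2)" using WH by (simp only: of_nat_le_iff)
      then have "int (Wt n EH) + int (\<Sum>i<n. dH i) \<le> int (\<Sum>i<n. dH i ^ 2)" by (simp only: of_nat_add)
      then show ?thesis using i1 i2 by linarith
    qed
    have "int N ^ 3 - int N ^ 2 + 28 * int N - 36 * int q \<le> int (\<Sum>i<n. dH i ^ 3)"
      using lin_help[OF i3 iWG iWH s_eq] .
    then show "int N ^ 3 - int N ^ 2 + 28 * int N - 36 * int q \<le> (\<Sum>i<n. x i ^ 3)"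
      by (simp add: x_def)
  qed
  then obtain i0 where i0: "i0 < n" "dH i0 = N" and oth: "\<And>i. i < n \<Longrightarrow> i \<noteq> i0 \<Longrightarrow> dH i = 2 \<or> dH i = 3"
    unfolding x_def by force
  define cnt where "cnt v = (if v = N then 1 else if v = 3 then s else if v = 2 then 2 * q else 0)" for v
  have N23: "N \<noteq> 2" "N \<noteq> 3" using N15 by auto
  have SH1: "(\<Sum>i<n. dH i) = N + 3 * s + 4 * q" using e1 SG1 by simp
  note cc = count23[OF i0 N23 oth SH1 nN N_def]
  have c3: "card {i. i < n \<and> dH i = 3} = s" by (rule cc(1))
  have c2: "card {i. i < n \<and> dH i = 2} = 2 * q" by (rule cc(2))
  have cH: "card {i. i < n \<and> dH i = v} = cnt v" for v
  proof -
    consider "v = N" | "v = 3" | "v = 2" | "v \<noteq> N \<and> v \<noteq> 3 \<and> v \<noteq> 2" by blast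
    then show ?thesis
    proof cases
      case 1
      have "{i. i < n \<and> dH i = v} = {i0}"
      proof
        show "{i. i < n \<and> dH i = v} \<subseteq> {i0}"
        proof
          fix i assume "i \<in> {i. i < n \<and> dH i = v}"
          then have "i < n" "dH i = N" using 1 by auto
          then show "i \<in> {i0}" using oth[of i] N23 by (cases "i = i0") auto
        qed
        show "{i0} \<subseteq> {i. i < n \<and> dH i = v}" using 1 i0 by auto
      qed
      then show ?thesis using 1 by (simp add: cnt_def)
    next
      case 2 then show ?thesis using c3 N23 by (simp add: cnt_def)
    next
      case 3 then show ?thesis using c2 N23 by (simp add: cnt_def)
    next
      case 4
      have "{i. i < n \<and> dH i = v} = {}"
      proof -
        have "\<not> (i < n \<and> dH i = v)" for i
          using 4 i0 oth[of i] by (cases "i = i0") auto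
        then show ?thesis by auto
      qed
      then show ?thesis using 4 by (simp add: cnt_def)
    qed
  qed
  have dG_N: "dG i = N \<longleftrightarrow> i = 0" if "i < n" for i
    using dGv[OF that] N23 by auto
  have dG_3: "dG i = 3 \<longleftrightarrow> 1 \<le> i \<and> i \<le> s" if "i < n" for i
    using dGv[OF that] N23 by auto
  have dG_2: "dG i = 2 \<longleftrightarrow> s < i" if "i < n" for i
    using dGv[OF that] N23 by auto
  have dG_o: "dG i = N \<or> dG i = 3 \<or> dG i = 2" if "i < n" for i
    using dGv[OF that] by auto
  have cG: "card {i. i < n \<and> dG i = v} = cnt v" for v
  proof (cases "v = N")
    case True
    have "{i. i < n \<and> dG i = v} = {0}" using True dG_N nN by auto
    then show ?thesis using True by (simp add: cnt_def)
  next
    case vN: False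
    show ?thesis
    proof (cases "v = 3")
      case True
      have "{i. i < n \<and> dG i = v} = {1..s}" using True dG_3 nN by (auto simp: N_def)
      then show ?thesis using True vN by (simp add: cnt_def)
    next
      case v3: False
      show ?thesis
      proof (cases "v = 2")
        case True
        have "{i. i < n \<and> dG i = v} = {s+1..<n}" using True dG_2 by auto
        then show ?thesis using True vN v3 nd by (simp add: cnt_def)
      next
        case v2: False
        have "{i. i < n \<and> dG i = v} = {}" using vN v3 v2 dG_o by force
        then show ?thesis using vN v3 v2 by (simp add: cnt_def)
      qed
    qed
  qed
  have DS: "degree_sequence n EH = degree_sequence n G"
  proof (rule multiset_eqI)
    fix v
    show "count (degree_sequence n EH) v = count (degree_sequence n G) v"
      unfolding degree_sequence_def count_map_upt using cH[of v] cG[of v] by (simp add: dH_def dG_def)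
  qed
  have "(\<Sum>i<n. dH i ^ 3) = (\<Sum>i<n. dG i ^ 3)"
    using DS unfolding dH_def dG_def degree_sequence_def by (simp add: sum_map_upt[of "\<lambda>x. x ^ 3"])
  then have "Wt n EH = Wt n G" using e3 by simp
  then have "triangles n EH = triangles n G" using Wt_triangles[OF sgH] Wt_triangles[OF sgG] by simp
  then show ?thesis using DS mn by (simp add: G_def)
qed

end
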